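(* Let $n,m\ge1$, $a^{(1)},b^{(1)}\in\mathbb{R}^n$, $a^{(2)},b^{(2)}\in\mathbb{R}^m$, and for $z\in\mathbb{R}$ put $X(z)=a^{(1)}+b^{(1)}z$, $Y(z)=a^{(2)}+b^{(2)}z$. For $i\in[n],j\in[m]$ and $M\in\mathcal{M}_{i,j}$ let $L_{i,j}(M,z)=\sum_{k\le i,\,l\le j}M_{kl}\,(X_k(z)-Y_l(z))^2$, $\hat L_{i,j}(z)=\min_{M\in\mathcal{M}_{i,j}}L_{i,j}(M,z)$, and $$\hat{\mathcal{M}}_{i,j}=\{M\in\mathcal{M}_{i,j} : \exists z\in\mathbb{R}\ \text{with}\ \hat L_{i,j}(z)=L_{i,j}(M,z)\},$$ with the conventions $\hat{\mathcal{M}}_{0,0}=\{\text{the empty }0\times0\text{ matrix}\}$ and $\hat{\mathcal{M}}_{i,j}=\emptyset$ if exactly one of $i,j$ is $0$. Define $$\tilde{\mathcal{M}}_{i,j}=\Big\{\mathrm{vstack}\big(\hat M,(0,\dots,0,1)\big):\hat M\in\hat{\mathcal{M}}_{i-1,j}\Big\}\cup\Big\{\mathrm{hstack}\big(\hat M,(0,\dots,0,1)^\top\big):\hat M\in\hat{\mathcal{M}}_{i,j-1}\Big\}\cup\Big\{\begin{pmatrix}\hat M&0\\0&1\end{pmatrix}:\hat M\in\hat{\mathcal{M}}_{i-1,j-1}\Big\},$$ all resulting matrices being $i\times j$. Then for every $i\in[n],j\in[m]$, $$\hat{\mathcal{M}}_{i,j}=\Big\{M\in\tilde{\mathcal{M}}_{i,j}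 : \exists z\in\mathbb{R}\ \text{with}\ L_{i,j}(M,z)=\min_{M'\in\tilde{\mathcal{M}}_{i,j}}L_{i,j}(M',z)\Big\},$$ i.e. $\hat{\mathcal{M}}_{i,j}$ is the set of matrices in $\tilde{\mathcal{M}}_{i,j}$ that minimize $L_{i,j}(\cdot,z)$ over $\tilde{\mathcal{M}}_{i,j}$ for some $z\in\mathbb{R}$.
   Context: For $i,j\ge1$, $\mathcal{M}_{i,j}\subset\{0,1\}^{i\times j}$ is the set of binary alignment matrices: matrices whose set of entries equal to $1$ is exactly the set of cells of a warping path $(1,1)=(i_1,j_1),\dots,(i_K,j_K)=(i,j)$ with each step in $\{(1,0),(0,1),(1,1)\}$. $\mathrm{vstack}(A,r)$ appends the row $r$ (of length $j$) below an $(i-1)\times j$ matrix $A$; $\mathrm{hstack}(A,c)$ appends the column $c$ (of length $i$) to the right of an $i\times(j-1)$ matrix $A$; $\begin{pmatrix}\hat M&0\\0&1\end{pmatrix}$ denotes the $i\times j$ matrix obtained from the $(i-1)\times(j-1)$ matrix $\hat M$ by adding a zero last row and zero last column except for entry $(i,j)$ equal to $1$. *)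

theory Defs
  imports Complex_Main
begin

text \<open>An i x j real matrix is represented as a function nat => nat => real, entry (k,l)
  for 1 <= k <= i, 1 <= l <= j (1-based indices); entries outside this range are 0.
  The empty 0 x 0 matrix is the constant zero function.\<close>

type_synonym mat = "nat \<Rightarrow> nat \<Rightarrow> real"

definition warping_path :: "nat \<Rightarrow> nat \<Rightarrow> (nat \<times> nat) list \<Rightarrow> bool" where
  "warping_path i j ps \<longleftrightarrow> ps \<noteq> [] \<and> hd ps = (1,1) \<and> last ps = (i,j) \<and>
     (\<forall>t. Suc t < length ps \<longrightarrow>
        (let (a,b) = ps ! t; (c,d) = ps ! Suc t in
          (c,d) = (a+1,b) \<or> (c,d) = (a,b+1) \<or> (c,d) = (a+1,b+1)))"

definition path_matrix :: "(nat \<times> nat) list \<Rightarrow> mat" where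
  "path_matrix ps = (\<lambda>k l. if (k,l) \<in> set ps then 1 else 0)"

definition align_mats :: "nat \<Rightarrow> nat \<Rightarrow> mat set" where
  "align_mats i j = {M. \<exists>ps. warping_path i j ps \<and> M = path_matrix ps}"

definition vstack :: "nat \<Rightarrow> nat \<Rightarrow> mat \<Rightarrow> (nat \<Rightarrow> real) \<Rightarrow> mat" where
  "vstack i j A r = (\<lambda>k l. if 1 \<le> k \<and> k \<le> i \<and> 1 \<le> l \<and> l \<le> j
        then (if k = i then r l else A k l) else 0)"

definition hstack :: "nat \<Rightarrow> nat \<Rightarrow> mat \<Rightarrow> (nat \<Rightarrow> real) \<Rightarrow> mat" where
  "hstack i j A c = (\<lambda>k l. if 1 \<le> k \<and> k \<le> i \<and> 1 \<le> l \<and> l \<le> j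
        then (if l = j then c k else A k l) else 0)"

definition diag_ext :: "nat \<Rightarrow> nat \<Rightarrow> mat \<Rightarrow> mat" where
  "diag_ext i j A = (\<lambda>k l. if 1 \<le> k \<and> k \<le> i \<and> 1 \<le> l \<and> l \<le> j
        then (if k = i \<and> l = j then 1 else if k < i \<and> l < j then A k l else 0) else 0)"

definition last_unit :: "nat \<Rightarrow> nat \<Rightarrow> real" where
  "last_unit j = (\<lambda>l. if l = j then 1 else 0)"

definition Lcost :: "(nat \<Rightarrow> real) \<Rightarrow> (nat \<Rightarrow> real) \<Rightarrow> (nat \<Rightarrow> real) \<Rightarrow> (nat \<Rightarrow> real)
    \<Rightarrow> nat \<Rightarrow> nat \<Rightarrow> mat \<Rightarrow> real \<Rightarrow> real" where
  "Lcost a1 b1 a2 b2 i j M z =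
     (\<Sum>k=1..i. \<Sum>l=1..j. M k l * ((a1 k + b1 k * z) - (a2 l + b2 l * z))\<^sup>2)"

definition Lhat :: "(nat \<Rightarrow> real) \<Rightarrow> (nat \<Rightarrow> real) \<Rightarrow> (nat \<Rightarrow> real) \<Rightarrow> (nat \<Rightarrow> real)
    \<Rightarrow> nat \<Rightarrow> nat \<Rightarrow> real \<Rightarrow> real" where
  "Lhat a1 b1 a2 b2 i j z = Min ((\<lambda>M. Lcost a1 b1 a2 b2 i j M z) ` align_mats i j)"

definition Mhat :: "(nat \<Rightarrow> real) \<Rightarrow> (nat \<Rightarrow> real) \<Rightarrow> (nat \<Rightarrow> real) \<Rightarrow> (nat \<Rightarrow> real)
    \<Rightarrow> nat \<Rightarrow> nat \<Rightarrow> mat set" where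
  "Mhat a1 b1 a2 b2 i j =
     (if i = 0 \<and> j = 0 then {(\<lambda>_ _. 0)}
      else if i = 0 \<or> j = 0 then {}
      else {M \<in> align_mats i j. \<exists>z. Lhat a1 b1 a2 b2 i j z = Lcost a1 b1 a2 b2 i j M z})"

definition Mtilde :: "(nat \<Rightarrow> real) \<Rightarrow> (nat \<Rightarrow> real) \<Rightarrow> (nat \<Rightarrow> real) \<Rightarrow> (nat \<Rightarrow> real)
    \<Rightarrow> nat \<Rightarrow> nat \<Rightarrow> mat set" where
  "Mtilde a1 b1 a2 b2 i j =
      (\<lambda>A. vstack i j A (last_unit j)) ` Mhat a1 b1 a2 b2 (i - 1) j
    \<union> (\<lambda>A. hstack i j A (last_unit i)) ` Mhat a1 b1 a2 b2 i (j - 1)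
    \<union> (\<lambda>A. diag_ext i j A) ` Mhat a1 b1 a2 b2 (i - 1) (j - 1)"

end

theory Submission
  imports Defs
begin


definition stp :: "nat \<times> nat \<Rightarrow> nat \<times> nat \<Rightarrow> bool" where
  "stp p q \<longleftrightarrow> q = (fst p+1, snd p) \<or> q = (fst p, snd p+1) \<or> q = (fst p+1, snd p+1)"

lemma let_stp: "(let (a,b) = p; (c,d) = q in
          (c,d) = (a+1,b) \<or> (c,d) = (a,b+1) \<or> (c,d) = (a+1,b+1)) = stp p q"
  by (cases p; cases q) (simp add: stp_def)

lemma wp_alt: "warping_path i j ps \<longleftrightarrow> ps \<noteq> [] \<and> hd ps = (1,1) \<and> last ps = (i,j) \<and>
   (\<forall>t. Suc t < length ps \<longrightarrow> stp (ps!t) (ps!Suc t))"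
  unfolding warping_path_def let_stp by (rule refl)

lemma wp_mono:
  assumes "warping_path i j ps" "t \<le> t'" "t' < length ps"
  shows "fst (ps!t) \<le> fst (ps!t') \<and> snd (ps!t) \<le> snd (ps!t')"
  using assms(2,3)
proof (induction t')
  case 0 then show ?case by simp
next
  case (Suc t')
  show ?case
  proof (cases "t \<le> t'")
    case True
    then have "fst (ps!t) \<le> fst (ps!t') \<and> snd (ps!t) \<le> snd (ps!t')" using Suc by simp
    moreover have "stp (ps!t') (ps!Suc t')" using assms(1) Suc.prems(2) unfolding wp_alt by blast
    ultimately show ?thesis unfolding stp_def by auto
  next
    case False
    then have "t = Suc t'" using Suc by simp
    then show ?thesis by simp
  qed
qed

lemma wp_bounds:
  assumes "warping_path i j ps" "(a,b) \<in> set ps"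
  shows "1 \<le> a \<and> a \<le> i \<and> 1 \<le> b \<and> b \<le> j"
proof -
  obtain t where t: "t < length ps" "ps!t = (a,b)" using assms(2) by (metis in_set_conv_nth)
  have ne: "ps \<noteq> []" and h: "ps!0 = (1,1)" and l: "ps!(length ps - 1) = (i,j)"
    using assms(1) unfolding warping_path_def by (auto simp: hd_conv_nth last_conv_nth)
  have "fst (ps!0) \<le> fst (ps!t) \<and> snd (ps!0) \<le> snd (ps!t)" using wp_mono[OF assms(1), of 0 t] t by simp
  moreover have "fst (ps!t) \<le> fst (ps!(length ps - 1)) \<and> snd (ps!t) \<le> snd (ps!(length ps - 1))"
    using wp_mono[OF assms(1), of t "length ps - 1"] t by simp
  ultimately show ?thesis using h l t by simp
qed

lemma wp_extend:
  assumes "warping_path c d ps" "stp (c,d) (i,j)"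
  shows "warping_path i j (ps @ [(i,j)])"
proof -
  have ne: "ps \<noteq> []" and h: "hd ps = (1,1)" and l: "last ps = (c,d)"
    and st0: "\<forall>t. Suc t < length ps \<longrightarrow> stp (ps!t) (ps!Suc t)"
    using assms(1) unfolding wp_alt by auto
  have st: "stp ((ps @ [(i,j)]) ! t) ((ps @ [(i,j)]) ! Suc t)"
    if "Suc t < length (ps @ [(i,j)])" for t
  proof (cases "Suc t < length ps")
    case True
    then show ?thesis using st0 by (simp add: nth_append)
  next
    case False
    then have "t = length ps - 1" using that by simp
    then have "(ps @ [(i,j)]) ! t = (c,d)" "(ps @ [(i,j)]) ! Suc t = (i,j)"
      using ne l by (auto simp: nth_append last_conv_nth)
    then show ?thesis using assms(2) by simp
  qed
  show ?thesis unfolding wp_alt using ne h st by auto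
qed

lemma wp_decomp:
  assumes "warping_path i j ps" "2 \<le> length ps"
  obtains c d where "warping_path c d (butlast ps)" "ps = butlast ps @ [(i,j)]" "stp (c,d) (i,j)"
proof -
  define q where "q = butlast ps"
  obtain c d where cd: "last q = (c,d)" by fastforce
  have ne: "ps \<noteq> []" and h: "hd ps = (1,1)" and l: "last ps = (i,j)"
    and st0: "\<forall>t. Suc t < length ps \<longrightarrow> stp (ps!t) (ps!Suc t)"
    using assms(1) unfolding wp_alt by auto
  have qne: "q \<noteq> []" using assms(2) unfolding q_def by (cases ps) auto
  have ps: "ps = q @ [(i,j)]" using ne l unfolding q_def by (metis append_butlast_last_id)
  have hq: "hd q = (1,1)" using h qne ps by (metis hd_append2)
  have lq: "length ps = Suc (length q)" using ps by simp
  have stq: "stp (q ! t) (q ! Suc t)" if "Suc t < length q" for t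
    using st0[rule_format, of t] that unfolding q_def by (simp add: nth_butlast)
  have wq: "warping_path c d q" unfolding wp_alt using qne hq cd stq by auto
  have lt: "Suc (length q - 1) < length ps" using qne lq by simp
  have "stp (ps ! (length q - 1)) (ps ! Suc (length q - 1))" using st0 lt by blast
  moreover have "ps ! (length q - 1) = (c,d)" using qne cd unfolding ps
    by (simp add: nth_append last_conv_nth)
  moreover have "ps ! Suc (length q - 1) = (i,j)" using qne unfolding ps
    by (simp add: nth_append)
  ultimately have "stp (c,d) (i,j)" by simp
  then show ?thesis using that wq ps unfolding q_def by blast
qed



lemma pm_v:
  assumes "warping_path c j q"
  shows "path_matrix (q @ [(Suc c, j)]) = vstack (Suc c) j (path_matrix q) (last_unit j)"
proof (intro ext)
  fix k l
  have b: "\<And>a b. (a,b) \<in> set q \<Longrightarrow> 1 \<le> a \<and> a \<le> c \<and> 1 \<le> b \<and> b \<le> j" using wp_bounds[OF assms] by blast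
  have "1 \<le> j" using b assms unfolding wp_alt by (metis last_in_set)
  then show "path_matrix (q @ [(Suc c, j)]) k l = vstack (Suc c) j (path_matrix q) (last_unit j) k l"
    unfolding path_matrix_def vstack_def last_unit_def using b[of k l] by auto
qed

lemma pm_h:
  assumes "warping_path i d q"
  shows "path_matrix (q @ [(i, Suc d)]) = hstack i (Suc d) (path_matrix q) (last_unit i)"
proof (intro ext)
  fix k l
  have b: "\<And>a b. (a,b) \<in> set q \<Longrightarrow> 1 \<le> a \<and> a \<le> i \<and> 1 \<le> b \<and> b \<le> d" using wp_bounds[OF assms] by blast
  have "1 \<le> i" using b assms unfolding wp_alt by (metis last_in_set)
  then show "path_matrix (q @ [(i, Suc d)]) k l = hstack i (Suc d) (path_matrix q) (last_unit i) k l"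
    unfolding path_matrix_def hstack_def last_unit_def using b[of k l] by auto
qed

lemma pm_d:
  assumes "warping_path c d q"
  shows "path_matrix (q @ [(Suc c, Suc d)]) = diag_ext (Suc c) (Suc d) (path_matrix q)"
proof (intro ext)
  fix k l
  have b: "\<And>a b. (a,b) \<in> set q \<Longrightarrow> 1 \<le> a \<and> a \<le> c \<and> 1 \<le> b \<and> b \<le> d" using wp_bounds[OF assms] by blast
  show "path_matrix (q @ [(Suc c, Suc d)]) k l = diag_ext (Suc c) (Suc d) (path_matrix q) k l"
  proof (cases "(k,l) \<in> set q")
    case True
    then show ?thesis using b[OF True] unfolding path_matrix_def diag_ext_def by auto
  next
    case False
    then show ?thesis unfolding path_matrix_def diag_ext_def by auto
  qed
qed

lemma pm_1: "path_matrix [(1,1)] = diag_ext 1 1 (\<lambda>_ _. 0)"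
  unfolding path_matrix_def diag_ext_def by (intro ext) auto

definition cst :: "(nat \<Rightarrow> real) \<Rightarrow> (nat \<Rightarrow> real) \<Rightarrow> (nat \<Rightarrow> real) \<Rightarrow> (nat \<Rightarrow> real)
    \<Rightarrow> real \<Rightarrow> nat \<Rightarrow> nat \<Rightarrow> real" where
  "cst a1 b1 a2 b2 z k l = ((a1 k + b1 k * z) - (a2 l + b2 l * z))\<^sup>2"

lemma Lcost_alt: "Lcost a1 b1 a2 b2 i j M z = (\<Sum>k=1..i. \<Sum>l=1..j. M k l * cst a1 b1 a2 b2 z k l)"
  unfolding Lcost_def cst_def by simp

lemma L_v:
  assumes "1 \<le> j"
  shows "Lcost a1 b1 a2 b2 (Suc c) j (vstack (Suc c) j A (last_unit j)) z
     = Lcost a1 b1 a2 b2 c j A z + cst a1 b1 a2 b2 z (Suc c) j"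
proof -
  let ?C = "cst a1 b1 a2 b2 z"
  have "(\<Sum>l=1..j. vstack (Suc c) j A (last_unit j) (Suc c) l * ?C (Suc c) l)
      = (\<Sum>l=1..j. (if l = j then ?C (Suc c) l else 0))"
    by (rule sum.cong) (auto simp: vstack_def last_unit_def)
  also have "\<dots> = ?C (Suc c) j" using assms by simp
  finally have 1: "(\<Sum>l=1..j. vstack (Suc c) j A (last_unit j) (Suc c) l * ?C (Suc c) l) = ?C (Suc c) j" .
  have 2: "(\<Sum>k=1..c. \<Sum>l=1..j. vstack (Suc c) j A (last_unit j) k l * ?C k l)
     = (\<Sum>k=1..c. \<Sum>l=1..j. A k l * ?C k l)"
    by (intro sum.cong refl) (auto simp: vstack_def)
  show ?thesis unfolding Lcost_alt using 1 2 by simp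
qed

lemma L_h:
  assumes "1 \<le> i"
  shows "Lcost a1 b1 a2 b2 i (Suc d) (hstack i (Suc d) A (last_unit i)) z
     = Lcost a1 b1 a2 b2 i d A z + cst a1 b1 a2 b2 z i (Suc d)"
proof -
  let ?C = "cst a1 b1 a2 b2 z"
  have "(\<Sum>k=1..i. \<Sum>l=1..Suc d. hstack i (Suc d) A (last_unit i) k l * ?C k l)
     = (\<Sum>k=1..i. (\<Sum>l=1..d. A k l * ?C k l) + (if k = i then ?C k (Suc d) else 0))"
  proof (rule sum.cong[OF refl])
    fix k assume k: "k \<in> {1..i}"
    have "(\<Sum>l=1..d. hstack i (Suc d) A (last_unit i) k l * ?C k l) = (\<Sum>l=1..d. A k l * ?C k l)"
      using k by (intro sum.cong refl) (auto simp: hstack_def)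
    then show "(\<Sum>l=1..Suc d. hstack i (Suc d) A (last_unit i) k l * ?C k l)
       = (\<Sum>l=1..d. A k l * ?C k l) + (if k = i then ?C k (Suc d) else 0)"
      using k by (simp add: hstack_def last_unit_def)
  qed
  also have "\<dots> = Lcost a1 b1 a2 b2 i d A z + ?C i (Suc d)"
    unfolding Lcost_alt sum.distrib using assms by simp
  finally show ?thesis unfolding Lcost_alt .
qed

lemma L_d:
  shows "Lcost a1 b1 a2 b2 (Suc c) (Suc d) (diag_ext (Suc c) (Suc d) A) z
     = Lcost a1 b1 a2 b2 c d A z + cst a1 b1 a2 b2 z (Suc c) (Suc d)"
proof -
  let ?C = "cst a1 b1 a2 b2 z"
  have 1: "(\<Sum>l=1..d. diag_ext (Suc c) (Suc d) A (Suc c) l * ?C (Suc c) l) = 0"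
    by (rule sum.neutral) (auto simp: diag_ext_def)
  have 2: "(\<Sum>k=1..c. \<Sum>l=1..Suc d. diag_ext (Suc c) (Suc d) A k l * ?C k l)
     = (\<Sum>k=1..c. \<Sum>l=1..d. A k l * ?C k l)"
  proof (rule sum.cong[OF refl])
    fix k assume k: "k \<in> {1..c}"
    have "(\<Sum>l=1..d. diag_ext (Suc c) (Suc d) A k l * ?C k l) = (\<Sum>l=1..d. A k l * ?C k l)"
      using k by (intro sum.cong refl) (auto simp: diag_ext_def)
    then show "(\<Sum>l=1..Suc d. diag_ext (Suc c) (Suc d) A k l * ?C k l) = (\<Sum>l=1..d. A k l * ?C k l)"
      using k by (simp add: diag_ext_def)
  qed
  show ?thesis unfolding Lcost_alt using 1 2 by (simp add: diag_ext_def)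
qed

lemma finite_align: "finite (align_mats i j)"
proof (rule finite_subset)
  show "align_mats i j \<subseteq> (\<lambda>S k l. if (k,l) \<in> S then 1 else 0) ` Pow ({1..i}\<times>{1..j})"
  proof
    fix M assume "M \<in> align_mats i j"
    then obtain ps where ps: "warping_path i j ps" "M = path_matrix ps" unfolding align_mats_def by auto
    have "set ps \<subseteq> {1..i}\<times>{1..j}" using wp_bounds[OF ps(1)] by auto
    then show "M \<in> (\<lambda>S k l. if (k,l) \<in> S then 1 else 0) ` Pow ({1..i}\<times>{1..j})"
      using ps(2) unfolding path_matrix_def by auto
  qed
qed simp



lemma ext_v: "A \<in> align_mats c j \<Longrightarrow> vstack (Suc c) j A (last_unit j) \<in> align_mats (Suc c) j"
proof -
  assume "A \<in> align_mats c j"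
  then obtain q where q: "warping_path c j q" "A = path_matrix q" unfolding align_mats_def by auto
  have "warping_path (Suc c) j (q @ [(Suc c, j)])" by (rule wp_extend[OF q(1)]) (simp add: stp_def)
  then show ?thesis unfolding align_mats_def using pm_v[OF q(1)] q(2) by (intro CollectI exI[of _ "q @ [(Suc c,j)]"]) simp
qed

lemma ext_h: "A \<in> align_mats i d \<Longrightarrow> hstack i (Suc d) A (last_unit i) \<in> align_mats i (Suc d)"
proof -
  assume "A \<in> align_mats i d"
  then obtain q where q: "warping_path i d q" "A = path_matrix q" unfolding align_mats_def by auto
  have "warping_path i (Suc d) (q @ [(i, Suc d)])" by (rule wp_extend[OF q(1)]) (simp add: stp_def)
  then show ?thesis unfolding align_mats_def using pm_h[OF q(1)] q(2) by (intro CollectI exI[of _ "q @ [(i,Suc d)]"]) simp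
qed

lemma ext_d: "A \<in> align_mats c d \<Longrightarrow> diag_ext (Suc c) (Suc d) A \<in> align_mats (Suc c) (Suc d)"
proof -
  assume "A \<in> align_mats c d"
  then obtain q where q: "warping_path c d q" "A = path_matrix q" unfolding align_mats_def by blast
  have "warping_path (Suc c) (Suc d) (q @ [(Suc c, Suc d)])" by (rule wp_extend[OF q(1)]) (simp add: stp_def)
  then show ?thesis unfolding align_mats_def using pm_d[OF q(1)] q(2) by (intro CollectI exI[of _ "q @ [(Suc c,Suc d)]"]) simp
qed

lemma wp_11: "warping_path 1 1 [(1,1)]"
  unfolding wp_alt by simp

lemma ext_0: "diag_ext 1 1 (\<lambda>_ _. 0) \<in> align_mats 1 1"
  unfolding align_mats_def using pm_1 wp_11 by (intro CollectI exI[of _ "[(1,1)]"]) simp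

lemma Mhat_align: "1 \<le> i \<Longrightarrow> 1 \<le> j \<Longrightarrow> A \<in> Mhat a1 b1 a2 b2 i j \<Longrightarrow> A \<in> align_mats i j"
  unfolding Mhat_def by auto

lemma Mtilde_sub:
  assumes "1 \<le> i" "1 \<le> j"
  shows "Mtilde a1 b1 a2 b2 i j \<subseteq> align_mats i j"
proof
  fix M assume "M \<in> Mtilde a1 b1 a2 b2 i j"
  then consider (v) A where "A \<in> Mhat a1 b1 a2 b2 (i-1) j" "M = vstack i j A (last_unit j)"
    | (h) A where "A \<in> Mhat a1 b1 a2 b2 i (j-1)" "M = hstack i j A (last_unit i)"
    | (d) A where "A \<in> Mhat a1 b1 a2 b2 (i-1) (j-1)" "M = diag_ext i j A"
    unfolding Mtilde_def by blast
  then show "M \<in> align_mats i j"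
  proof cases
    case v
    then have "i - 1 \<noteq> 0" using assms by (auto simp: Mhat_def)
    then have "A \<in> align_mats (i-1) j" using v(1) assms Mhat_align by auto
    then show ?thesis using ext_v[of A "i-1" j] v(2) assms by simp
  next
    case h
    then have "j - 1 \<noteq> 0" using assms by (auto simp: Mhat_def)
    then have "A \<in> align_mats i (j-1)" using h(1) assms Mhat_align by auto
    then show ?thesis using ext_h[of A i "j-1"] h(2) assms by simp
  next
    case d
    show ?thesis
    proof (cases "i - 1 = 0 \<and> j - 1 = 0")
      case True
      then have "A = (\<lambda>_ _. 0)" "i = 1" "j = 1" using d assms by (auto simp: Mhat_def)
      then show ?thesis using ext_0 d(2) by simp
    next
      case False
      then have "i - 1 \<noteq> 0" "j - 1 \<noteq> 0" using d(1) by (auto simp: Mhat_def split: if_splits)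
      then have "A \<in> align_mats (i-1) (j-1)" using d(1) Mhat_align by auto
      then show ?thesis using ext_d[of A "i-1" "j-1"] d(2) assms by simp
    qed
  qed
qed

lemma prefix_opt:
  fixes f g :: "'a \<Rightarrow> real"
  assumes "A \<in> S" "finite S" "finite T" "\<And>A'. A' \<in> S \<Longrightarrow> E A' \<in> T"
    "\<And>A'. f (E A') = g A' + \<kappa>" "f (E A) = Min (f ` T)"
  shows "g A = Min (g ` S)"
proof -
  have "g A \<le> g y" if "y \<in> S" for y
  proof -
    have "Min (f ` T) \<le> f (E y)" using assms(3,4) that by simp
    then show ?thesis using assms(5,6)[simplified] by (metis add_le_cancel_right assms(5) assms(6))
  qed
  then show ?thesis using assms(1,2) by (intro Min_eqI[symmetric]) auto
qed

lemma opt_in_tilde: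
  assumes "1 \<le> i" "1 \<le> j" "M \<in> align_mats i j"
    "Lcost a1 b1 a2 b2 i j M z = Lhat a1 b1 a2 b2 i j z"
  shows "M \<in> Mtilde a1 b1 a2 b2 i j"
proof -
  obtain ps where ps: "warping_path i j ps" "M = path_matrix ps"
    using assms(3) unfolding align_mats_def by auto
  have opt: "Lcost a1 b1 a2 b2 i j M z = Min ((\<lambda>M. Lcost a1 b1 a2 b2 i j M z) ` align_mats i j)"
    using assms(4) unfolding Lhat_def .
  show ?thesis
  proof (cases "length ps \<ge> 2")
    case False
    moreover have "ps \<noteq> []" using ps(1) unfolding wp_alt by simp
    ultimately have "length ps = 1" by (metis One_nat_def Suc_1 length_0_conv less_2_cases not_le)
    then obtain x where "ps = [x]" by (metis One_nat_def length_0_conv length_Suc_conv)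
    then have "ps = [(1,1)]" "i = 1" "j = 1" using ps(1) unfolding wp_alt by auto
    then have "M = diag_ext i j (\<lambda>_ _. 0)" using pm_1 ps(2) by simp
    moreover have "(\<lambda>_ _. 0) \<in> Mhat a1 b1 a2 b2 (i-1) (j-1)" using \<open>i = 1\<close> \<open>j = 1\<close>
      by (simp add: Mhat_def)
    ultimately show ?thesis unfolding Mtilde_def by blast
  next
    case True
    then obtain c d where q: "warping_path c d (butlast ps)" "ps = butlast ps @ [(i,j)]"
      "stp (c,d) (i,j)" using wp_decomp[OF ps(1)] by blast
    define A where "A = path_matrix (butlast ps)"
    have Aal: "A \<in> align_mats c d" unfolding A_def align_mats_def using q(1) by blast
    have cd1: "1 \<le> c" "1 \<le> d" using wp_bounds[OF q(1), of c d] q(1) unfolding wp_alt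
      by (metis last_in_set)+
    have Mhat_cd: "A \<in> Mhat a1 b1 a2 b2 c d" if "Lcost a1 b1 a2 b2 c d A z = Lhat a1 b1 a2 b2 c d z"
      using that[symmetric] Aal cd1 unfolding Mhat_def by auto
    consider "i = Suc c" "j = d" | "i = c" "j = Suc d" | "i = Suc c" "j = Suc d"
      using q(3) unfolding stp_def by auto
    then show ?thesis
    proof cases
      case 1
      have M: "M = vstack i j A (last_unit j)" using ps(2) q(2) pm_v[OF q(1)[unfolded 1(2)[symmetric]]]
        unfolding A_def 1 by metis
      have "Lcost a1 b1 a2 b2 c d A z = Lhat a1 b1 a2 b2 c d z"
        unfolding Lhat_def
        apply (rule prefix_opt[where E="\<lambda>A. vstack i j A (last_unit j)" and T="align_mats i j"
              and f="\<lambda>M. Lcost a1 b1 a2 b2 i j M z" and \<kappa>="cst a1 b1 a2 b2 z i j"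
              and g="\<lambda>M. Lcost a1 b1 a2 b2 c d M z"])
        subgoal by (rule Aal)
        subgoal by (rule finite_align)
        subgoal by (rule finite_align)
        subgoal for A' unfolding 1 by (rule ext_v)
        subgoal for A' unfolding 1 using L_v cd1 by simp
        subgoal using opt M by simp
        done
      then have "A \<in> Mhat a1 b1 a2 b2 (i-1) j" using Mhat_cd 1 by simp
      then show ?thesis using M unfolding Mtilde_def by blast
    next
      case 2
      have M: "M = hstack i j A (last_unit i)" using ps(2) q(2) pm_h[OF q(1)[unfolded 2(1)[symmetric]]]
        unfolding A_def 2 by metis
      have "Lcost a1 b1 a2 b2 c d A z = Lhat a1 b1 a2 b2 c d z"
        unfolding Lhat_def
        apply (rule prefix_opt[where E="\<lambda>A. hstack i j A (last_unit i)" and T="align_mats i j"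
              and f="\<lambda>M. Lcost a1 b1 a2 b2 i j M z" and \<kappa>="cst a1 b1 a2 b2 z i j"
              and g="\<lambda>M. Lcost a1 b1 a2 b2 c d M z"])
        subgoal by (rule Aal)
        subgoal by (rule finite_align)
        subgoal by (rule finite_align)
        subgoal for A' unfolding 2 by (rule ext_h)
        subgoal for A' unfolding 2 using L_h cd1 by simp
        subgoal using opt M by simp
        done
      then have "A \<in> Mhat a1 b1 a2 b2 i (j-1)" using Mhat_cd 2 by simp
      then show ?thesis using M unfolding Mtilde_def by blast
    next
      case 3
      have M: "M = diag_ext i j A" using ps(2) q(2) pm_d[OF q(1)]
        unfolding A_def 3 by metis
      have "Lcost a1 b1 a2 b2 c d A z = Lhat a1 b1 a2 b2 c d z"
        unfolding Lhat_def
        apply (rule prefix_opt[where E="\<lambda>A. diag_ext i j A" and T="align_mats i j"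
              and f="\<lambda>M. Lcost a1 b1 a2 b2 i j M z" and \<kappa>="cst a1 b1 a2 b2 z i j"
              and g="\<lambda>M. Lcost a1 b1 a2 b2 c d M z"])
        subgoal by (rule Aal)
        subgoal by (rule finite_align)
        subgoal by (rule finite_align)
        subgoal for A' unfolding 3 by (rule ext_d)
        subgoal for A' unfolding 3 using L_d cd1 by simp
        subgoal using opt M by simp
        done
      then have "A \<in> Mhat a1 b1 a2 b2 (i-1) (j-1)" using Mhat_cd 3 by simp
      then show ?thesis using M unfolding Mtilde_def by blast
    qed
  qed
qed

theorem lemma2:
  fixes n m :: nat and a1 b1 a2 b2 :: "nat \<Rightarrow> real" and i j :: nat
  assumes "1 \<le> n" and "1 \<le> m"
    and "1 \<le> i" and "i \<le> n" and "1 \<le> j" and "j \<le> m"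
  shows "Mhat a1 b1 a2 b2 i j =
    {M \<in> Mtilde a1 b1 a2 b2 i j. \<exists>z::real.
       Lcost a1 b1 a2 b2 i j M z = Min ((\<lambda>M'. Lcost a1 b1 a2 b2 i j M' z) ` Mtilde a1 b1 a2 b2 i j)}"
proof -
  have i: "1 \<le> i" and j: "1 \<le> j" using assms by auto
  have sub: "Mtilde a1 b1 a2 b2 i j \<subseteq> align_mats i j" using Mtilde_sub[OF i j] .
  have finT: "finite (Mtilde a1 b1 a2 b2 i j)" using finite_subset[OF sub finite_align] .
  have MH: "Mhat a1 b1 a2 b2 i j = {M \<in> align_mats i j. \<exists>z. Lhat a1 b1 a2 b2 i j z = Lcost a1 b1 a2 b2 i j M z}"
    using i j unfolding Mhat_def by auto
  show ?thesis
  proof (rule set_eqI, rule iffI)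
    fix M assume "M \<in> Mhat a1 b1 a2 b2 i j"
    then obtain z where M: "M \<in> align_mats i j" "Lhat a1 b1 a2 b2 i j z = Lcost a1 b1 a2 b2 i j M z"
      using MH by blast
    have MT: "M \<in> Mtilde a1 b1 a2 b2 i j" using opt_in_tilde[OF i j M(1) M(2)[symmetric]] .
    have "Lcost a1 b1 a2 b2 i j M z \<le> Lcost a1 b1 a2 b2 i j y z" if "y \<in> Mtilde a1 b1 a2 b2 i j" for y
    proof -
      have "y \<in> align_mats i j" using that sub by blast
      then have "Lhat a1 b1 a2 b2 i j z \<le> Lcost a1 b1 a2 b2 i j y z"
        unfolding Lhat_def using finite_align by simp
      then show ?thesis using M(2) by simp
    qed
    then have "Lcost a1 b1 a2 b2 i j M z = Min ((\<lambda>M'. Lcost a1 b1 a2 b2 i j M' z) ` Mtilde a1 b1 a2 b2 i j)"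
      using MT finT by (intro Min_eqI[symmetric]) auto
    then show "M \<in> {M \<in> Mtilde a1 b1 a2 b2 i j. \<exists>z::real.
       Lcost a1 b1 a2 b2 i j M z = Min ((\<lambda>M'. Lcost a1 b1 a2 b2 i j M' z) ` Mtilde a1 b1 a2 b2 i j)}"
      using MT by blast
  next
    fix M assume "M \<in> {M \<in> Mtilde a1 b1 a2 b2 i j. \<exists>z::real.
       Lcost a1 b1 a2 b2 i j M z = Min ((\<lambda>M'. Lcost a1 b1 a2 b2 i j M' z) ` Mtilde a1 b1 a2 b2 i j)}"
    then obtain z where MT: "M \<in> Mtilde a1 b1 a2 b2 i j"
      and Mz: "Lcost a1 b1 a2 b2 i j M z = Min ((\<lambda>M'. Lcost a1 b1 a2 b2 i j M' z) ` Mtilde a1 b1 a2 b2 i j)"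
      by blast
    have Ma: "M \<in> align_mats i j" using MT sub by blast
    let ?f = "\<lambda>M'. Lcost a1 b1 a2 b2 i j M' z"
    have "Min (?f ` align_mats i j) \<in> ?f ` align_mats i j"
      using Ma finite_align by (intro Min_in) auto
    then obtain Ms where Ms: "Ms \<in> align_mats i j" "?f Ms = Lhat a1 b1 a2 b2 i j z"
      unfolding Lhat_def by auto
    have MsT: "Ms \<in> Mtilde a1 b1 a2 b2 i j" using opt_in_tilde[OF i j Ms] .
    have "?f M \<le> ?f Ms" using Mz MsT finT by simp
    moreover have "Lhat a1 b1 a2 b2 i j z \<le> ?f M" unfolding Lhat_def using Ma finite_align by simp
    ultimately have "Lhat a1 b1 a2 b2 i j z = ?f M" using Ms(2) by simp
    then show "M \<in> Mhat a1 b1 a2 b2 i j" using MH Ma by blast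
  qed
qed

end
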